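(* A threshold function $f$ is linear read-once if and only if no restriction of $f$ equals, up to renaming of variables, a function in $\mathcal{G}$, where $\mathcal{G}$ is the set of all functions obtained from $g_n(x_1,\ldots,x_n)=x_1x_2\vee x_1x_3\vee\cdots\vee x_1x_n\vee x_2x_3\cdots x_n$, $n\ge3$, by negating some (possibly none) of the variables.
   Context: $f$ on $\{0,1\}^n$ is a threshold function if there are $w_1,\ldots,w_n,t\in\mathbb{R}$ with $f(\mathbf{x})=0\iff\sum_iw_ix_i\le t$. A restriction of $f$ is obtained by fixing some variables to constants. Linear read-once (lro): constant or representable by a nested formula (literals $x,\overline{x}$ are nested; $x\vee t$, $x\wedge t$, $\overline{x}\vee t$, $\overline{x}\wedge t$ are nested when $t$ is nested and contains neither $x$ nor $\overline{x}$). *)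

theory Defs
  imports Main HOL.Real
begin

text \<open>A Boolean function of n variables is represented as f :: (nat => bool) => bool
  that depends only on the coordinates i < n (True = 1, False = 0).\<close>

definition boolfun :: "nat \<Rightarrow> ((nat \<Rightarrow> bool) \<Rightarrow> bool) \<Rightarrow> bool" where
  "boolfun n f \<longleftrightarrow> (\<forall>x y. (\<forall>i<n. x i = y i) \<longrightarrow> f x = f y)"

definition threshold :: "nat \<Rightarrow> ((nat \<Rightarrow> bool) \<Rightarrow> bool) \<Rightarrow> bool" where
  "threshold n f \<longleftrightarrow> (\<exists>(w::nat \<Rightarrow> real) (t::real).
      \<forall>x. (\<not> f x) \<longleftrightarrow> (\<Sum>i<n. w i * (if x i then 1 else 0)) \<le> t)"

datatype nform = Lit nat bool | Disj nat bool nform | Conj nat bool nform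

fun lit_val :: "nat \<Rightarrow> bool \<Rightarrow> (nat \<Rightarrow> bool) \<Rightarrow> bool" where
  "lit_val i b x = (if b then x i else \<not> x i)"

fun nf_eval :: "nform \<Rightarrow> (nat \<Rightarrow> bool) \<Rightarrow> bool" where
  "nf_eval (Lit i b) x = lit_val i b x"
| "nf_eval (Disj i b t) x = (lit_val i b x \<or> nf_eval t x)"
| "nf_eval (Conj i b t) x = (lit_val i b x \<and> nf_eval t x)"

fun nf_vars :: "nform \<Rightarrow> nat set" where
  "nf_vars (Lit i b) = {i}"
| "nf_vars (Disj i b t) = insert i (nf_vars t)"
| "nf_vars (Conj i b t) = insert i (nf_vars t)"

fun nested :: "nform \<Rightarrow> bool" where
  "nested (Lit i b) = True"
| "nested (Disj i b t) = (nested t \<and> i \<notin> nf_vars t)"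
| "nested (Conj i b t) = (nested t \<and> i \<notin> nf_vars t)"

definition lro :: "nat \<Rightarrow> ((nat \<Rightarrow> bool) \<Rightarrow> bool) \<Rightarrow> bool" where
  "lro n f \<longleftrightarrow> (\<forall>x y. f x = f y) \<or>
     (\<exists>\<phi>. nested \<phi> \<and> nf_vars \<phi> \<subseteq> {..<n} \<and> (\<forall>x. f x = nf_eval \<phi> x))"

text \<open>g_m(y_0,...,y_{m-1}) = y_0 y_1 \<or> ... \<or> y_0 y_{m-1} \<or> y_1 y_2 ... y_{m-1}
  (0-indexed version of g_m(x_1,...,x_m)), and its variant with the variables in N negated.\<close>

definition gfun :: "nat \<Rightarrow> (nat \<Rightarrow> bool) \<Rightarrow> bool" where
  "gfun m y \<longleftrightarrow> (\<exists>j\<in>{1..<m}. y 0 \<and> y j) \<or> (\<forall>j\<in>{1..<m}. y j)"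

definition gneg :: "nat \<Rightarrow> nat set \<Rightarrow> (nat \<Rightarrow> bool) \<Rightarrow> bool" where
  "gneg m N y = gfun m (\<lambda>i. if i \<in> N then \<not> y i else y i)"

definition has_G_restriction :: "nat \<Rightarrow> ((nat \<Rightarrow> bool) \<Rightarrow> bool) \<Rightarrow> bool" where
  "has_G_restriction n f \<longleftrightarrow>
     (\<exists>S c m \<sigma> N. S \<subseteq> {..<n} \<and> 3 \<le> m \<and> N \<subseteq> {..<m} \<and>
        bij_betw \<sigma> ({..<n} - S) {..<m} \<and>
        (\<forall>y. f (\<lambda>i. if i \<in> S then c i else y (\<sigma> i)) = gneg m N y))"

end

theory Submission
  imports Defs
begin


lemma nf_eval_cong: "(\<forall>i\<in>nf_vars \<phi>. x i = y i) \<Longrightarrow> nf_eval \<phi> x = nf_eval \<phi> y"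
  by (induction \<phi>) auto

lemma nf_canal: "\<exists>j\<in>nf_vars \<phi>. \<exists>c. \<forall>y z. nf_eval \<phi> (y(j:=c)) = nf_eval \<phi> (z(j:=c))"
proof (cases \<phi>)
  case (Lit i b) then show ?thesis by (intro bexI[of _ i] exI[of _ b]) auto
next
  case (Disj i b t) then show ?thesis by (intro bexI[of _ i] exI[of _ b]) auto
next
  case (Conj i b t) then show ?thesis by (intro bexI[of _ i] exI[of _ "\<not>b"]) auto
qed

lemma restr_canal:
  "\<exists>j b. \<forall>y z. nf_eval \<phi> (\<lambda>i. if i \<in> S then c i else (y(j:=b)) (\<sigma> i))
                 = nf_eval \<phi> (\<lambda>i. if i \<in> S then c i else (z(j:=b)) (\<sigma> i))"
proof (induction \<phi>)
  case (Lit i b)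
  show ?case
  proof (cases "i \<in> S")
    case True then show ?thesis by auto
  next
    case False then show ?thesis by (intro exI[of _ "\<sigma> i"] exI[of _ b]) auto
  qed
next
  case (Disj i b t)
  show ?case
  proof (cases "i \<in> S")
    case True
    show ?thesis
    proof (cases "lit_val i b c")
      case True with \<open>i\<in>S\<close> show ?thesis by auto
    next
      case False
      from Disj.IH obtain j ba where H: "\<forall>y z. nf_eval t (\<lambda>i. if i \<in> S then c i else (y(j:=ba)) (\<sigma> i))
                 = nf_eval t (\<lambda>i. if i \<in> S then c i else (z(j:=ba)) (\<sigma> i))" by blast
      have E: "\<And>y. nf_eval (Disj i b t) (\<lambda>i'. if i' \<in> S then c i' else y (\<sigma> i'))
          = nf_eval t (\<lambda>i'. if i' \<in> S then c i' else y (\<sigma> i'))" using False \<open>i\<in>S\<close> by (cases b) simp_all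
      show ?thesis unfolding E using H by blast
    qed
  next
    case False then show ?thesis by (intro exI[of _ "\<sigma> i"] exI[of _ b]) auto
  qed
next
  case (Conj i b t)
  show ?case
  proof (cases "i \<in> S")
    case True
    show ?thesis
    proof (cases "lit_val i b c")
      case False
      have E: "\<And>y. nf_eval (Conj i b t) (\<lambda>i'. if i' \<in> S then c i' else y (\<sigma> i')) = False"
        using False \<open>i\<in>S\<close> by (cases b) simp_all
      show ?thesis unfolding E by blast
    next
      case True
      from Conj.IH obtain j ba where H: "\<forall>y z. nf_eval t (\<lambda>i. if i \<in> S then c i else (y(j:=ba)) (\<sigma> i))
                 = nf_eval t (\<lambda>i. if i \<in> S then c i else (z(j:=ba)) (\<sigma> i))" by blast
      have E: "\<And>y. nf_eval (Conj i b t) (\<lambda>i'. if i' \<in> S then c i' else y (\<sigma> i'))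
          = nf_eval t (\<lambda>i'. if i' \<in> S then c i' else y (\<sigma> i'))" using True \<open>i\<in>S\<close> by (cases b) simp_all
      show ?thesis unfolding E using H by blast
    qed
  next
    case False then show ?thesis by (intro exI[of _ "\<sigma> i"] exI[of _ "\<not>b"]) auto
  qed
qed

lemma gfun_F: assumes "3 \<le> m" shows "\<not> gfun m ((\<lambda>_. False)(j:=b))"
proof -
  have "\<not> (\<exists>k\<in>{1..<m}. ((\<lambda>_. False)(j:=b)) 0 \<and> ((\<lambda>_. False)(j:=b)) k)" by auto
  moreover have "(if j = 1 then 2 else 1) \<in> {1..<m}" using assms by auto
  moreover have "\<not> ((\<lambda>_. False)(j:=b)) (if j = 1 then 2 else (1::nat))" by auto
  ultimately show ?thesis unfolding gfun_def by blast
qed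

lemma gfun_T: assumes "3 \<le> m" shows "gfun m ((\<lambda>_. True)(j:=b))"
proof (cases "j = 0")
  case True then show ?thesis unfolding gfun_def by auto
next
  case False
  have "(if j = 1 then 2 else 1) \<in> {1..<m}" using assms by auto
  moreover have "((\<lambda>_. True)(j:=b)) (if j = 1 then 2 else (1::nat))" by auto
  moreover have "((\<lambda>_. True)(j:=b)) 0" using False by auto
  ultimately show ?thesis unfolding gfun_def by blast
qed

lemma gneg_noncanal: assumes "3 \<le> m"
  shows "gneg m N ((\<lambda>i. i \<in> N)(j:=b)) \<noteq> gneg m N ((\<lambda>i. i \<notin> N)(j:=b))"
proof -
  have 1: "(\<lambda>i. if i \<in> N then \<not> ((\<lambda>i. i \<in> N)(j:=b)) i else ((\<lambda>i. i \<in> N)(j:=b)) i)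
     = (\<lambda>_. False)(j := (if j \<in> N then \<not> b else b))" by (rule ext) auto
  have 2: "(\<lambda>i. if i \<in> N then \<not> ((\<lambda>i. i \<notin> N)(j:=b)) i else ((\<lambda>i. i \<notin> N)(j:=b)) i)
     = (\<lambda>_. True)(j := (if j \<in> N then \<not> b else b))" by (rule ext) auto
  show ?thesis unfolding gneg_def 1 2 using gfun_F[OF assms] gfun_T[OF assms] by blast
qed

lemma dir1:
  assumes "lro n f" shows "\<not> has_G_restriction n f"
proof
  assume "has_G_restriction n f"
  then obtain S c m \<sigma> N where m: "3 \<le> m" and
    eq: "\<forall>y. f (\<lambda>i. if i \<in> S then c i else y (\<sigma> i)) = gneg m N y"
    unfolding has_G_restriction_def by blast
  have "\<exists>j b. \<forall>y z. f (\<lambda>i. if i \<in> S then c i else (y(j:=b)) (\<sigma> i))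
                 = f (\<lambda>i. if i \<in> S then c i else (z(j:=b)) (\<sigma> i))"
    using assms unfolding lro_def
  proof
    assume "\<forall>x y. f x = f y" then show ?thesis by blast
  next
    assume "\<exists>\<phi>. nested \<phi> \<and> nf_vars \<phi> \<subseteq> {..<n} \<and> (\<forall>x. f x = nf_eval \<phi> x)"
    then obtain \<phi> where "\<forall>x. f x = nf_eval \<phi> x" by blast
    then have fe: "f = nf_eval \<phi>" by blast
    show ?thesis unfolding fe by (rule restr_canal)
  qed
  then obtain j b where H: "\<forall>y z. f (\<lambda>i. if i \<in> S then c i else (y(j:=b)) (\<sigma> i))
                 = f (\<lambda>i. if i \<in> S then c i else (z(j:=b)) (\<sigma> i))" by blast
  have "gneg m N ((\<lambda>i. i \<in> N)(j:=b)) = f (\<lambda>i. if i \<in> S then c i else (((\<lambda>i. i \<in> N)(j:=b))) (\<sigma> i))"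
    by (rule eq[rule_format, symmetric])
  also have "\<dots> = f (\<lambda>i. if i \<in> S then c i else (((\<lambda>i. i \<notin> N)(j:=b))) (\<sigma> i))"
    by (rule H[rule_format])
  also have "\<dots> = gneg m N ((\<lambda>i. i \<notin> N)(j:=b))"
    by (rule eq[rule_format])
  finally show False using gneg_noncanal[OF m, of N j b] by blast
qed




definition dep :: "nat set \<Rightarrow> ((nat \<Rightarrow> bool) \<Rightarrow> bool) \<Rightarrow> bool" where
  "dep F h \<longleftrightarrow> (\<forall>x y. (\<forall>i\<in>F. x i = y i) \<longrightarrow> h x = h y)"

definition thr :: "nat set \<Rightarrow> ((nat \<Rightarrow> bool) \<Rightarrow> bool) \<Rightarrow> bool" where
  "thr F h \<longleftrightarrow> (\<exists>(w::nat \<Rightarrow> real) (t::real).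
      \<forall>x. (\<not> h x) \<longleftrightarrow> (\<Sum>i\<in>F. w i * (if x i then 1 else 0)) \<le> t)"

definition lroF :: "nat set \<Rightarrow> ((nat \<Rightarrow> bool) \<Rightarrow> bool) \<Rightarrow> bool" where
  "lroF F h \<longleftrightarrow> (\<forall>x y. h x = h y) \<or>
     (\<exists>\<phi>. nested \<phi> \<and> nf_vars \<phi> \<subseteq> F \<and> (\<forall>x. h x = nf_eval \<phi> x))"

definition hasG :: "nat set \<Rightarrow> ((nat \<Rightarrow> bool) \<Rightarrow> bool) \<Rightarrow> bool" where
  "hasG F h \<longleftrightarrow>
     (\<exists>S c m \<sigma> N. S \<subseteq> F \<and> 3 \<le> m \<and> N \<subseteq> {..<m} \<and>
        bij_betw \<sigma> (F - S) {..<m} \<and>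
        (\<forall>y. h (\<lambda>i. if i \<in> S then c i else y (\<sigma> i)) = gneg m N y))"

lemma restr_dep: fixes x :: nat and b :: bool assumes "dep F h" shows "dep (F - {x}) (\<lambda>y. h (y(x:=b)))"
  unfolding dep_def
proof (intro allI impI)
  fix y z :: "nat \<Rightarrow> bool" assume "\<forall>i\<in>F - {x}. y i = z i"
  then have "\<forall>i\<in>F. (y(x:=b)) i = (z(x:=b)) i" by auto
  then show "h (y(x:=b)) = h (z(x:=b))" using assms unfolding dep_def by blast
qed

lemma restr_thr: fixes b :: bool assumes "finite F" "x \<in> F" "thr F h" shows "thr (F - {x}) (\<lambda>y. h (y(x:=b)))"
proof -
  obtain w t where wt: "\<forall>x. (\<not> h x) \<longleftrightarrow> (\<Sum>i\<in>F. w i * (if x i then 1 else 0)) \<le> (t::real)"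
    using assms(3) unfolding thr_def by blast
  have "\<forall>y. (\<not> h (y(x:=b))) \<longleftrightarrow> (\<Sum>i\<in>F-{x}. w i * (if y i then 1 else 0)) \<le> t - w x * (if b then 1 else 0)"
  proof
    fix y
    have "(\<Sum>i\<in>F. w i * (if (y(x:=b)) i then 1 else 0)) = w x * (if b then 1 else 0) + (\<Sum>i\<in>F-{x}. w i * (if (y(x:=b)) i then 1 else 0))"
      using assms(1,2) by (simp add: sum.remove)
    also have "(\<Sum>i\<in>F-{x}. w i * (if (y(x:=b)) i then 1 else 0)) = (\<Sum>i\<in>F-{x}. w i * (if y i then 1 else 0))"
      by (rule sum.cong) auto
    finally show "(\<not> h (y(x:=b))) \<longleftrightarrow> (\<Sum>i\<in>F-{x}. w i * (if y i then 1 else 0)) \<le> t - w x * (if b then 1 else 0)"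
      using wt by auto
  qed
  then show ?thesis unfolding thr_def by blast
qed

lemma restr_hasG: fixes b :: bool assumes "x \<in> F" "hasG (F - {x}) (\<lambda>y. h (y(x:=b)))" shows "hasG F h"
proof -
  obtain S c m \<sigma> N where S: "S \<subseteq> F - {x}" "3 \<le> m" "N \<subseteq> {..<m}" "bij_betw \<sigma> (F - {x} - S) {..<m}"
    and eq: "\<forall>y. h ((\<lambda>i. if i \<in> S then c i else y (\<sigma> i))(x:=b)) = gneg m N y"
    using assms(2) unfolding hasG_def by blast
  have 1: "F - insert x S = F - {x} - S" by auto
  have 2: "\<And>y. (\<lambda>i. if i \<in> insert x S then (c(x:=b)) i else y (\<sigma> i)) = (\<lambda>i. if i \<in> S then c i else y (\<sigma> i))(x:=b)"
    by (intro ext) (use S(1) in auto)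
  show ?thesis unfolding hasG_def
    apply (rule exI[of _ "insert x S"], rule exI[of _ "c(x:=b)"], rule exI[of _ m], rule exI[of _ \<sigma>], rule exI[of _ N])
    using S assms(1) eq unfolding 1 2 by auto
qed




lemma lit_eq: "lit_val x b y \<longleftrightarrow> y x = b" by (cases b) auto

lemma noncanal:
  fixes b :: bool
  assumes nl: "\<not> lroF F h" and x: "x \<in> F" and L: "lroF (F - {x}) (\<lambda>y. h (y(x:=\<not>b)))"
  shows "\<exists>y z. h (y(x:=b)) \<noteq> h (z(x:=b))"
proof (rule ccontr)
  assume "\<not> ?thesis"
  then have C: "\<forall>y z. h (y(x:=b)) = h (z(x:=b))" by blast
  define c0 where "c0 = h ((\<lambda>_. False)(x:=b))"
  have hc: "\<And>y. y x = b \<Longrightarrow> h y = c0"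
  proof -
    fix y :: "nat \<Rightarrow> bool" assume "y x = b"
    then have "y = y(x:=b)" by (auto simp: fun_eq_iff)
    then show "h y = c0" unfolding c0_def using C by metis
  qed
  have hn: "\<And>y. y x \<noteq> b \<Longrightarrow> h y = h (y(x:=\<not>b))"
  proof -
    fix y :: "nat \<Rightarrow> bool" assume "y x \<noteq> b"
    then have "y(x:=\<not>b) = y" by (auto simp: fun_eq_iff)
    then show "h y = h (y(x:=\<not>b))" by simp
  qed
  have "lroF F h"
    using L unfolding lroF_def
  proof
    assume K: "\<forall>y z. h (y(x:=\<not>b)) = h (z(x:=\<not>b))"
    define d0 where "d0 = h ((\<lambda>_. False)(x:=\<not>b))"
    have hd: "\<And>y. y x \<noteq> b \<Longrightarrow> h y = d0" unfolding d0_def using hn K by metis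
    show "(\<forall>y z. h y = h z) \<or> (\<exists>\<phi>. nested \<phi> \<and> nf_vars \<phi> \<subseteq> F \<and> (\<forall>y. h y = nf_eval \<phi> y))"
    proof (cases "c0 = d0")
      case True
      then have "\<forall>y z. h y = h z" using hc hd by metis
      then show ?thesis by blast
    next
      case False
      show ?thesis
      proof (cases c0)
        case True
        then have "\<forall>y. h y = nf_eval (Lit x b) y" using hc hd False by (auto simp: lit_eq)
        then show ?thesis using x by (intro disjI2 exI[of _ "Lit x b"]) auto
      next
        case c0F: False
        then have "\<forall>y. h y = nf_eval (Lit x (\<not>b)) y" using hc hd False by (auto simp: lit_eq)
        then show ?thesis using x by (intro disjI2 exI[of _ "Lit x (\<not>b)"]) auto
      qed
    qed
  next
    assume "\<exists>\<phi>. nested \<phi> \<and> nf_vars \<phi> \<subseteq> F - {x} \<and> (\<forall>y. h (y(x:=\<not>b)) = nf_eval \<phi> y)"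
    then obtain \<phi> where P: "nested \<phi>" "nf_vars \<phi> \<subseteq> F - {x}" "\<forall>y. h (y(x:=\<not>b)) = nf_eval \<phi> y"
      by blast
    have ev: "\<And>y. nf_eval \<phi> (y(x:=\<not>b)) = nf_eval \<phi> y"
      using P(2) by (intro nf_eval_cong) auto
    have hn2: "\<And>y. y x \<noteq> b \<Longrightarrow> h y = nf_eval \<phi> y" using hn P(3) by metis
    show "(\<forall>y z. h y = h z) \<or> (\<exists>\<phi>. nested \<phi> \<and> nf_vars \<phi> \<subseteq> F \<and> (\<forall>y. h y = nf_eval \<phi> y))"
    proof (cases c0)
      case True
      then have "\<forall>y. h y = nf_eval (Disj x b \<phi>) y" using hc hn2 by (auto simp: lit_eq)
      moreover have "nested (Disj x b \<phi>)" "nf_vars (Disj x b \<phi>) \<subseteq> F" using P x by auto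
      ultimately show ?thesis by blast
    next
      case False
      then have "\<forall>y. h y = nf_eval (Conj x (\<not>b) \<phi>) y" using hc hn2 by (auto simp: lit_eq)
      moreover have "nested (Conj x (\<not>b) \<phi>)" "nf_vars (Conj x (\<not>b) \<phi>) \<subseteq> F" using P x by auto
      ultimately show ?thesis by blast
    qed
  qed
  then show False using nl by blast
qed

lemma canal2:
  fixes b :: bool
  assumes L: "lroF (F - {x}) (\<lambda>y. h (y(x:=b)))" and nc: "\<exists>y z. h (y(x:=b)) \<noteq> h (z(x:=b))"
  shows "\<exists>k\<in>F-{x}. \<exists>c. \<forall>y z. h ((y(k:=c))(x:=b)) = h ((z(k:=c))(x:=b))"
proof -
  from L nc obtain \<phi> where P: "nf_vars \<phi> \<subseteq> F - {x}" "\<forall>y. h (y(x:=b)) = nf_eval \<phi> y"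
    unfolding lroF_def by blast
  from nf_canal[of \<phi>] obtain j c where "j \<in> nf_vars \<phi>" "\<forall>y z. nf_eval \<phi> (y(j:=c)) = nf_eval \<phi> (z(j:=c))"
    by blast
  then show ?thesis using P by (intro bexI[of _ j] exI[of _ c]) auto
qed




lemma weights:
  assumes fin: "finite F" and th: "thr F h"
  obtains v :: "nat \<Rightarrow> real" and s :: "nat \<Rightarrow> bool" and t' :: real where "\<And>i. 0 \<le> v i"
    "\<And>y. h y \<longleftrightarrow> t' < sum v {i\<in>F. y i = s i}"
proof -
  obtain w t where wt: "\<forall>x. (\<not> h x) \<longleftrightarrow> (\<Sum>i\<in>F. w i * (if x i then 1 else 0)) \<le> (t::real)"
    using th unfolding thr_def by blast
  define s where "s i = (0 \<le> w i)" for i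
  define v where "v i = \<bar>w i\<bar>" for i
  define C where "C = (\<Sum>i\<in>F. if w i < 0 then w i else 0)"
  have trm: "\<And>y i. w i * (if y i then 1 else 0) = (if y i = s i then v i else 0) + (if w i < 0 then w i else 0)"
    by (auto simp: s_def v_def)
  have "\<And>y. h y \<longleftrightarrow> t - C < sum v {i\<in>F. y i = s i}"
  proof -
    fix y
    have "(\<Sum>i\<in>F. w i * (if y i then 1 else 0)) = (\<Sum>i\<in>F. (if y i = s i then v i else 0)) + C"
      unfolding trm C_def by (simp add: sum.distrib)
    also have "(\<Sum>i\<in>F. (if y i = s i then v i else 0)) = sum v {i\<in>F. y i = s i}"
      using fin by (simp add: sum.inter_filter)
    finally show "h y \<longleftrightarrow> t - C < sum v {i\<in>F. y i = s i}" using wt[rule_format, of y] by linarith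
  qed
  moreover have "\<And>i. 0 \<le> v i" by (simp add: v_def)
  ultimately show ?thesis using that by blast
qed




lemma caseB:
  assumes fin: "finite F" and dep: "dep F h" and th: "thr F h" and nl: "\<not> lroF F h"
  and B: "\<forall>x\<in>F. \<forall>b. lroF (F - {x}) (\<lambda>y. h (y(x:=b)))"
  shows "hasG F h"
proof -
  have NC: "\<And>x b. x \<in> F \<Longrightarrow> \<exists>y z. h (y(x:=b)) \<noteq> h (z(x:=b))"
    using noncanal[OF nl] B by blast
  have CA: "\<And>x b. x \<in> F \<Longrightarrow> \<exists>k\<in>F-{x}. \<exists>c. \<forall>y z. h ((y(k:=c))(x:=b)) = h ((z(k:=c))(x:=b))"
    by (rule canal2[OF B[rule_format] NC])
  obtain v :: "nat \<Rightarrow> real" and t' :: real and s where v0: "\<And>i. 0 \<le> v i" and H: "\<And>y. h y \<longleftrightarrow> t' < sum v {i\<in>F. y i = s i}"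
    by (rule weights[OF fin th]) blast
  define V where "V = sum v F"
  have Fne: "F \<noteq> {}"
  proof
    assume "F = {}"
    then have "\<forall>x y. h x = h y" using dep unfolding dep_def by auto
    then show False using nl unfolding lroF_def by blast
  qed
  have sub: "\<And>A. A \<subseteq> F \<Longrightarrow> sum v A \<le> V"
    unfolding V_def using fin v0 by (intro sum_mono2) auto
  have mono: "\<And>A B. A \<subseteq> B \<Longrightarrow> B \<subseteq> F \<Longrightarrow> sum v A \<le> sum v B"
    using fin v0 by (intro sum_mono2) (auto intro: finite_subset)
  have N1: "\<And>x. x \<in> F \<Longrightarrow> v x \<le> t'"
  proof (rule ccontr)
    fix x assume x: "x \<in> F" and "\<not> v x \<le> t'"
    have "\<And>y. h (y(x:=s x))"
    proof -
      fix y :: "nat \<Rightarrow> bool"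
      have "v x = sum v {x}" by simp
      also have "\<dots> \<le> sum v {i\<in>F. (y(x:=s x)) i = s i}" using x by (intro mono) auto
      finally show "h (y(x:=s x))" using H \<open>\<not> v x \<le> t'\<close> by auto
    qed
    then show False using NC[OF x, of "s x"] by blast
  qed
  have N2: "\<And>x. x \<in> F \<Longrightarrow> t' < V - v x"
  proof (rule ccontr)
    fix x assume x: "x \<in> F" and c: "\<not> t' < V - v x"
    have "\<And>y. \<not> h (y(x:=\<not> s x))"
    proof -
      fix y :: "nat \<Rightarrow> bool"
      have "sum v {i\<in>F. (y(x:=\<not>s x)) i = s i} \<le> sum v (F - {x})" by (intro mono) auto
      also have "\<dots> = V - v x" unfolding V_def using fin x by (simp add: sum_diff1)
      finally show "\<not> h (y(x:=\<not>s x))" using H c by auto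
    qed
    then show False using NC[OF x, of "\<not> s x"] by blast
  qed
  obtain x0 where x0: "x0 \<in> F" "\<And>k. k \<in> F \<Longrightarrow> v k \<le> v x0"
  proof -
    have "Max (v ` F) \<in> v ` F" using fin Fne by simp
    then obtain x0 where "x0 \<in> F" "v x0 = Max (v ` F)" by auto
    moreover have "\<And>k. k \<in> F \<Longrightarrow> v k \<le> Max (v ` F)" using fin by simp
    ultimately show ?thesis using that by auto
  qed
  have t0: "0 \<le> t'" using N1[OF x0(1)] v0[of x0] by linarith
  define P where "P A = (\<lambda>i. if i \<in> A then s i else \<not> s i)" for A
  have P1: "\<And>A k. (P A)(k := s k) = P (insert k A)" unfolding P_def by (auto simp: fun_eq_iff)
  have P2: "\<And>A k. (P A)(k := \<not> s k) = P (A - {k})" unfolding P_def by (auto simp: fun_eq_iff)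
  have HP: "\<And>A. h (P A) \<longleftrightarrow> t' < sum v (F \<inter> A)"
  proof -
    fix A
    have "{i\<in>F. P A i = s i} = F \<inter> A" unfolding P_def by auto
    then show "h (P A) \<longleftrightarrow> t' < sum v (F \<inter> A)" using H by simp
  qed
  have cb: "\<And>k c. c = s k \<or> c = (\<not> s k)" by auto
  have a: "\<And>j. j \<in> F - {x0} \<Longrightarrow> t' < v x0 + v j"
  proof -
    fix j assume j: "j \<in> F - {x0}"
    obtain k c where k: "k \<in> F - {j}" and K: "\<forall>y z. h ((y(k:=c))(j:=s j)) = h ((z(k:=c))(j:=s j))"
      using CA[of j "s j"] j by blast
    have e: "h (((P {})(k:=c))(j:=s j)) = h (((P UNIV)(k:=c))(j:=s j))" using K by blast
    show "t' < v x0 + v j"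
    proof (cases "c = s k")
      case True
      have "F \<inter> insert j (insert k {}) = {j, k}" using j k by auto
      moreover have "F \<inter> insert j (insert k UNIV) = F" by auto
      ultimately have "t' < sum v {j, k}" using e N2[of j] j v0[of j] unfolding True P1 HP V_def by auto
      then show ?thesis using k x0(2)[of k] by auto
    next
      case False
      then have cc: "c = (\<not> s k)" by auto
      have "F \<inter> insert j ({} - {k}) = {j}" using j k by auto
      moreover have "F \<inter> insert j (UNIV - {k}) = F - {k}" using j k by auto
      moreover have "sum v (F - {k}) = V - v k" unfolding V_def using fin k by (simp add: sum_diff1)
      ultimately have False using e N2[of k] N1[of j] j k unfolding cc P1 P2 HP by auto
      then show ?thesis ..
    qed
  qed
  have b: "\<And>j. j \<in> F - {x0} \<Longrightarrow> V - v x0 - v j \<le> t'"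
  proof -
    fix j assume j: "j \<in> F - {x0}"
    obtain k c where k: "k \<in> F - {j}" and K: "\<forall>y z. h ((y(k:=c))(j:=\<not>s j)) = h ((z(k:=c))(j:=\<not>s j))"
      using CA[of j "\<not> s j"] j by blast
    have e: "h (((P {})(k:=c))(j:=\<not>s j)) = h (((P UNIV)(k:=c))(j:=\<not>s j))" using K by blast
    show "V - v x0 - v j \<le> t'"
    proof (cases "c = s k")
      case True
      have "F \<inter> (insert k {} - {j}) = {k}" using j k by auto
      moreover have "F \<inter> (insert k UNIV - {j}) = F - {j}" by auto
      moreover have "sum v (F - {j}) = V - v j" unfolding V_def using fin j by (simp add: sum_diff1)
      ultimately have False using e N2[of j] N1[of k] j k unfolding True P1 P2 HP by auto
      then show ?thesis ..
    next
      case False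
      then have cc: "c = (\<not> s k)" by auto
      have "F \<inter> ({} - {k} - {j}) = {}" by auto
      moreover have "F \<inter> (UNIV - {k} - {j}) = F - {k} - {j}" by auto
      moreover have "sum v (F - {k} - {j}) = V - v k - v j" unfolding V_def using fin j k
        by (simp add: sum_diff1)
      ultimately have "V - v k - v j \<le> t'" using e t0 unfolding cc P2 HP by auto
      then show ?thesis using x0(2)[of k] k by auto
    qed
  qed
  have Fx0: "F - {x0} \<noteq> {}" using CA[OF x0(1), of True] by blast
  have form: "\<And>y. h y \<longleftrightarrow> (y x0 = s x0 \<and> (\<exists>j\<in>F-{x0}. y j = s j)) \<or> (\<forall>j\<in>F-{x0}. y j = s j)"
  proof -
    fix y :: "nat \<Rightarrow> bool"
    define T where "T = {i\<in>F. y i = s i}"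
    have hT: "h y \<longleftrightarrow> t' < sum v T" unfolding T_def using H by simp
    have TF: "T \<subseteq> F" unfolding T_def by auto
    show "?thesis y"
    proof (cases "(y x0 = s x0 \<and> (\<exists>j\<in>F-{x0}. y j = s j))")
      case True
      then obtain j where j: "j \<in> F - {x0}" "y j = s j" by blast
      have "sum v {x0, j} \<le> sum v T" using True j x0(1) TF unfolding T_def by (intro mono) auto
      then show ?thesis using a[OF j(1)] j hT True by auto
    next
      case nA: False
      show ?thesis
      proof (cases "\<forall>j\<in>F-{x0}. y j = s j")
        case True
        have "sum v (F - {x0}) \<le> sum v T" using True TF unfolding T_def by (intro mono) auto
        moreover have "sum v (F - {x0}) = V - v x0" unfolding V_def using fin x0(1) by (simp add: sum_diff1)
        ultimately show ?thesis using N2[OF x0(1)] hT True by auto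
      next
        case False
        then obtain j where j: "j \<in> F - {x0}" "y j \<noteq> s j" by blast
        show ?thesis
        proof (cases "y x0 = s x0")
          case True
          then have "\<forall>j\<in>F-{x0}. y j \<noteq> s j" using nA by blast
          then have "sum v T \<le> sum v {x0}" using x0(1) TF unfolding T_def by (intro mono) auto
          then show ?thesis using N1[OF x0(1)] hT nA False by auto
        next
          case False
          have "sum v T \<le> sum v (F - {x0} - {j})" using False j TF unfolding T_def by (intro mono) auto
          moreover have "sum v (F - {x0} - {j}) = V - v x0 - v j" unfolding V_def using fin x0(1) j
            by (simp add: sum_diff1)
          ultimately show ?thesis using b[OF j(1)] hT nA \<open>\<not> (\<forall>j\<in>F-{x0}. y j = s j)\<close> by auto
        qed
      qed
    qed
  qed
  define m where "m = card F"
  have m3: "3 \<le> m"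
  proof (rule ccontr)
    assume "\<not> 3 \<le> m"
    moreover have "card (F - {x0}) \<noteq> 0" using Fx0 fin by simp
    moreover have "card (F - {x0}) = m - 1" unfolding m_def using fin x0(1) by simp
    ultimately have "card (F - {x0}) = 1" by linarith
    then obtain j where j: "F - {x0} = {j}" by (auto simp: card_Suc_eq)
    then have jF: "j \<in> F" by auto
    have "\<And>y. h (y(j:=s j))" using form j by auto
    then show False using NC[OF jF, of "s j"] by blast
  qed
  have "card (F - {x0}) = card {1..<m}" unfolding m_def using fin x0(1) by simp
  then obtain \<tau> where \<tau>: "bij_betw \<tau> (F - {x0}) {1..<m}"
    using finite_same_card_bij fin by blast
  define \<sigma> where "\<sigma> = \<tau>(x0 := 0)"
  have s1: "bij_betw \<sigma> (F - {x0}) {1..<m}"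
    using \<tau> unfolding \<sigma>_def by (rule bij_betw_cong[THEN iffD1, rotated]) auto
  have "bij_betw \<sigma> ((F - {x0}) \<union> {x0}) ({1..<m} \<union> {\<sigma> x0})"
    using s1 by (intro notIn_Un_bij_betw) (auto simp: \<sigma>_def)
  moreover have "(F - {x0}) \<union> {x0} = F" using x0(1) by auto
  moreover have "{1..<m} \<union> {\<sigma> x0} = {..<m}" using m3 by (auto simp: \<sigma>_def)
  ultimately have sb: "bij_betw \<sigma> F {..<m}" by simp
  have s0: "\<sigma> x0 = 0" by (simp add: \<sigma>_def)
  have simg: "\<sigma> ` (F - {x0}) = {1..<m}" using s1 by (simp add: bij_betw_def)
  define N where "N = \<sigma> ` {i\<in>F. \<not> s i}"
  have NS: "N \<subseteq> {..<m}" unfolding N_def using sb by (auto simp: bij_betw_def)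
  have key: "\<And>y i. i \<in> F \<Longrightarrow> (y (\<sigma> i) = s i) \<longleftrightarrow> (if \<sigma> i \<in> N then \<not> y (\<sigma> i) else y (\<sigma> i))"
  proof -
    fix y :: "nat \<Rightarrow> bool" and i assume i: "i \<in> F"
    have "\<sigma> i \<in> N \<longleftrightarrow> \<not> s i"
      using i sb unfolding N_def bij_betw_def inj_on_def by auto
    then show "?thesis y i" by auto
  qed
  have final: "\<forall>y. h (\<lambda>i. if i \<in> {} then c i else y (\<sigma> i)) = gneg m N y" for c :: "nat \<Rightarrow> bool"
  proof
    fix y :: "nat \<Rightarrow> bool"
    define y' where "y' i = (if i \<in> N then \<not> y i else y i)" for i
    have "h (\<lambda>i. y (\<sigma> i)) \<longleftrightarrow> (y' (\<sigma> x0) \<and> (\<exists>j\<in>F-{x0}. y' (\<sigma> j))) \<or> (\<forall>j\<in>F-{x0}. y' (\<sigma> j))"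
      unfolding form y'_def using key x0(1) by auto
    also have "\<dots> \<longleftrightarrow> gfun m y'"
      unfolding gfun_def s0 simg[symmetric] by auto
    finally show "h (\<lambda>i. if i \<in> {} then c i else y (\<sigma> i)) = gneg m N y"
      unfolding gneg_def y'_def by simp
  qed
  show ?thesis unfolding hasG_def
    apply (rule exI[of _ "{}"], rule exI[of _ "\<lambda>_. False"], rule exI[of _ m], rule exI[of _ \<sigma>], rule exI[of _ N])
    using m3 NS sb final by auto
qed




lemma main_hard: "finite F \<Longrightarrow> dep F h \<Longrightarrow> thr F h \<Longrightarrow> \<not> lroF F h \<Longrightarrow> hasG F h"
proof (induction "card F" arbitrary: F h rule: less_induct)
  case less
  show ?case
  proof (cases "\<exists>x\<in>F. \<exists>b. \<not> lroF (F - {x}) (\<lambda>y. h (y(x:=b)))")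
    case True
    then obtain x b where x: "x \<in> F" and nl: "\<not> lroF (F - {x}) (\<lambda>y. h (y(x:=b)))" by blast
    have "hasG (F - {x}) (\<lambda>y. h (y(x:=b)))"
    proof (rule less.hyps)
      show "card (F - {x}) < card F" using less.prems(1) x by (rule card_Diff1_less)
      show "finite (F - {x})" using less.prems(1) by simp
      show "dep (F - {x}) (\<lambda>y. h (y(x:=b)))" using less.prems(2) by (rule restr_dep)
      show "thr (F - {x}) (\<lambda>y. h (y(x:=b)))" using less.prems(1) x less.prems(3) by (rule restr_thr)
      show "\<not> lroF (F - {x}) (\<lambda>y. h (y(x:=b)))" by (rule nl)
    qed
    then show ?thesis by (rule restr_hasG[OF x])
  next
    case False
    have "\<forall>x\<in>F. \<forall>b. lroF (F - {x}) (\<lambda>y. h (y(x:=b)))" using False by blast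
    then show ?thesis by (rule caseB[OF less.prems])
  qed
qed

theorem mainTheorem17:
  fixes n :: nat and f :: "(nat \<Rightarrow> bool) \<Rightarrow> bool"
  assumes "boolfun n f" and "threshold n f"
  shows "lro n f \<longleftrightarrow> \<not> has_G_restriction n f"
proof
  assume "lro n f" then show "\<not> has_G_restriction n f" by (rule dir1)
next
  assume nG: "\<not> has_G_restriction n f"
  show "lro n f"
  proof (rule ccontr)
    assume nl: "\<not> lro n f"
    have "dep {..<n} f" using assms(1) unfolding dep_def boolfun_def by auto
    moreover have "thr {..<n} f" using assms(2) unfolding thr_def threshold_def by auto
    moreover have "\<not> lroF {..<n} f" using nl unfolding lroF_def lro_def by auto
    ultimately have "hasG {..<n} f" by (intro main_hard[OF finite_lessThan])
    then have "has_G_restriction n f" unfolding hasG_def has_G_restriction_def by blast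
    then show False using nG by blast
  qed
qed


end
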